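(* Suppose that every $\mathbb{C}$-algebra endomorphism $f$ of $\mathbb{C}[x,y]$ with $\operatorname{Jac}(f(x),f(y))\in\mathbb{C}^*$ is an automorphism of $\mathbb{C}[x,y]$ (the two-dimensional Jacobian Conjecture over $\mathbb{C}$). Then for every integral domain $D$ of characteristic zero and all $A,B,w\in D[x,y]$ with $\operatorname{Jac}(A,B)\in D^*$ and $\operatorname{Jac}(A,w)=0$, one has $w\in D[A]$.
   Context: $\operatorname{Jac}(u,v):=u_xv_y-u_yv_x$ for polynomials $u,v$ in two variables $x,y$. $D^*$ is the group of units of $D$. $D[A]$ is the $D$-subalgebra of $D[x,y]$ generated by $A$. *)

theory Defs
  imports Complex_Main "HOL-Computational_Algebra.Polynomial"
begin

text \<open>Bivariate polynomials D[x,y] are represented as D[x][y], i.e. the type 'a poly poly: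
  the outer variable is y, the coefficients are polynomials in x.\<close>

definition const2 :: "'a::zero \<Rightarrow> 'a poly poly" where
  "const2 c = [:[:c:]:]"

definition pderiv_x :: "'a::idom poly poly \<Rightarrow> 'a poly poly" where
  "pderiv_x p = map_poly pderiv p"

definition pderiv_y :: "'a::idom poly poly \<Rightarrow> 'a poly poly" where
  "pderiv_y p = pderiv p"

definition Jac :: "'a::idom poly poly \<Rightarrow> 'a poly poly \<Rightarrow> 'a poly poly" where
  "Jac u v = pderiv_x u * pderiv_y v - pderiv_y u * pderiv_x v"

text \<open>Substitution h(f,g): the D-algebra endomorphism of D[x,y] sending x to f and y to g, applied to h.\<close>
definition subst2 :: "'a::comm_ring_1 poly poly \<Rightarrow> 'a poly poly \<Rightarrow> 'a poly poly \<Rightarrow> 'a poly poly" where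
  "subst2 h f g = poly (map_poly (\<lambda>c. poly (map_poly const2 c) f) h) g"

definition gen_subalg :: "'a::comm_ring_1 poly poly \<Rightarrow> 'a poly poly set" where
  "gen_subalg A = {poly (map_poly const2 p) A | p. True}"

definition Jac_unit :: "'a::idom poly poly \<Rightarrow> 'a poly poly \<Rightarrow> bool" where
  "Jac_unit u v \<longleftrightarrow> (\<exists>c::'a. c dvd 1 \<and> Jac u v = const2 c)"

definition JC2_complex :: bool where
  "JC2_complex \<longleftrightarrow> (\<forall>f g :: complex poly poly. Jac_unit f g \<longrightarrow> bij (\<lambda>h. subst2 h f g))"

end

theory Submission
  imports Defs
begin


definition ev :: "'a::comm_ring_1 poly \<Rightarrow> 'a poly poly \<Rightarrow> 'a poly poly" where
  "ev p A = poly (map_poly const2 p) A"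

lemma const2_0[simp]: "const2 0 = 0" by (simp add: const2_def)
lemma const2_1[simp]: "const2 1 = 1" by (simp add: const2_def one_pCons)
lemma const2_add: "const2 (a + b) = const2 a + const2 b" by (simp add: const2_def)
lemma const2_diff: "const2 (a - b) = (const2 a - const2 b :: 'a::comm_ring_1 poly poly)" by (simp add: const2_def)
lemma const2_mult: "const2 (a * b) = (const2 a * const2 b :: 'a::comm_ring_1 poly poly)" by (simp add: const2_def)
lemma const2_eq_iff[simp]: "const2 a = const2 b \<longleftrightarrow> a = b" by (simp add: const2_def)

lemma ev_pCons: "ev (pCons a p) A = const2 a + A * ev p A"
  by (simp add: ev_def map_poly_pCons)
lemma ev_0[simp]: "ev 0 A = 0" by (simp add: ev_def)
lemma ev_const[simp]: "ev [:a:] A = const2 a" by (simp add: ev_pCons)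
lemma ev_add: "ev (p + q) A = ev p A + ev q A"
proof -
  have "map_poly const2 (p + q) = map_poly const2 p + map_poly const2 q"
    by (rule poly_eqI) (simp add: coeff_map_poly const2_add)
  thus ?thesis by (simp add: ev_def)
qed
lemma ev_smult: "ev (smult c p) A = const2 c * ev p A"
  by (induct p) (simp_all add: ev_pCons const2_mult algebra_simps)

definition Dx :: "'a::idom poly poly \<Rightarrow> 'a poly poly" where "Dx = pderiv_x"

lemma Dx_add: "pderiv_x (f + g) = pderiv_x f + pderiv_x g"
  by (rule poly_eqI) (simp add: pderiv_x_def coeff_map_poly pderiv_add)
lemma Dx_diff: "pderiv_x (f - g) = pderiv_x f - pderiv_x g"
  by (rule poly_eqI) (simp add: pderiv_x_def coeff_map_poly pderiv_diff)
lemma pderiv_sum': "pderiv (sum f I) = (\<Sum>i\<in>I. pderiv (f i))"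
  by (induct I rule: infinite_finite_induct) (simp_all add: pderiv_add)
lemma Dx_mult: "pderiv_x (f * g) = pderiv_x f * g + f * pderiv_x g"
proof (rule poly_eqI)
  fix n
  show "coeff (pderiv_x (f * g)) n = coeff (pderiv_x f * g + f * pderiv_x g) n"
    unfolding pderiv_x_def coeff_add coeff_map_poly[of pderiv, OF pderiv_0] coeff_mult pderiv_sum'
      sum.distrib[symmetric]
    by (rule sum.cong) (simp_all add: pderiv_mult coeff_map_poly algebra_simps)
qed
lemma Dx_0[simp]: "pderiv_x 0 = 0" by (simp add: pderiv_x_def)
lemma Dy_0[simp]: "pderiv_y 0 = 0" by (simp add: pderiv_y_def)
lemma Dx_const2[simp]: "pderiv_x (const2 c) = 0"
  by (simp add: pderiv_x_def const2_def map_poly_pCons)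
lemma Dy_const2[simp]: "pderiv_y (const2 c) = 0"
  by (simp add: pderiv_y_def const2_def)
lemma Dy_add: "pderiv_y (f + g) = pderiv_y f + pderiv_y g"
  by (simp add: pderiv_y_def pderiv_add)
lemma Dy_diff: "pderiv_y (f - g) = pderiv_y f - pderiv_y g"
  by (simp add: pderiv_y_def pderiv_diff)
lemma Dy_mult: "pderiv_y (f * g) = pderiv_y f * g + f * pderiv_y g"
  by (simp add: pderiv_y_def pderiv_mult algebra_simps)
lemma mixed: "pderiv_y (pderiv_x f) = pderiv_x (pderiv_y f)"
  by (rule poly_eqI) (simp add: pderiv_x_def pderiv_y_def coeff_map_poly coeff_pderiv pderiv_mult pderiv_add)

lemma chain_x: "pderiv_x (ev p A) = ev (pderiv p) A * pderiv_x A"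
  by (induct p) (simp_all add: ev_pCons Dx_add Dx_mult pderiv_pCons ev_add algebra_simps)
lemma chain_y: "pderiv_y (ev p A) = ev (pderiv p) A * pderiv_y A"
  by (induct p) (simp_all add: ev_pCons Dy_add Dy_mult pderiv_pCons ev_add algebra_simps)



lemma grad_alg:
  fixes a b p q r s C I :: "'b::comm_ring_1"
  assumes h1: "a*q - b*p = C" and h2: "a*s - b*r = 0" and h3: "I*C = 1"
  shows "r = I*(r*q - s*p)*a" "s = I*(r*q - s*p)*b"
proof -
  have e: "a*s = b*r" using h2 by simp
  have "I*(r*q - s*p)*a = I*(r*(a*q) - p*(a*s))" by (simp add: algebra_simps)
  also have "\<dots> = I*(r*(a*q) - p*(b*r))" by (simp add: e)
  also have "\<dots> = r*(I*(a*q - b*p))" by (simp add: algebra_simps)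
  also have "\<dots> = r" using h1 h3 by simp
  finally show "r = I*(r*q - s*p)*a" by simp
  have "I*(r*q - s*p)*b = I*(q*(b*r) - p*(b*s))" by (simp add: algebra_simps)
  also have "\<dots> = I*(q*(a*s) - p*(b*s))" by (simp add: e)
  also have "\<dots> = s*(I*(a*q - b*p))" by (simp add: algebra_simps)
  also have "\<dots> = s" using h1 h3 by simp
  finally show "s = I*(r*q - s*p)*b" by simp
qed

lemma grad:
  fixes A B w :: "'a::idom poly poly"
  assumes hJ: "Jac A B = const2 c" and cci: "c * ci = 1" and hw: "Jac A w = 0"
  defines "u \<equiv> const2 ci * (pderiv_x w * pderiv_y B - pderiv_y w * pderiv_x B)"
  shows "pderiv_x w = u * pderiv_x A" "pderiv_y w = u * pderiv_y A"
proof -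
  have h1: "pderiv_x A * pderiv_y B - pderiv_y A * pderiv_x B = const2 c" using hJ by (simp add: Jac_def)
  have h2: "pderiv_x A * pderiv_y w - pderiv_y A * pderiv_x w = 0" using hw by (simp add: Jac_def)
  have h3: "const2 ci * const2 c = (1 :: 'a poly poly)" using cci by (simp add: const2_mult[symmetric] mult.commute)
  show "pderiv_x w = u * pderiv_x A" unfolding u_def by (rule grad_alg(1)[OF h1 h2 h3])
  show "pderiv_y w = u * pderiv_y A" unfolding u_def by (rule grad_alg(2)[OF h1 h2 h3])
qed

lemma Jac_u:
  fixes A u w :: "'a::idom poly poly"
  assumes "pderiv_x w = u * pderiv_x A" "pderiv_y w = u * pderiv_y A"
  shows "Jac A u = 0"
proof -
  have "pderiv_y (pderiv_x w) = pderiv_x (pderiv_y w)" by (rule mixed)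
  hence "pderiv_y u * pderiv_x A + u * pderiv_y (pderiv_x A) = pderiv_x u * pderiv_y A + u * pderiv_x (pderiv_y A)"
    using assms by (simp add: Dx_mult Dy_mult)
  thus ?thesis by (simp add: Jac_def mixed algebra_simps)
qed

lemma integ:
  fixes q :: "'a::idom poly"
  shows "\<exists>p N. N > 0 \<and> pderiv p = smult (of_nat N) q"
proof -
  have "\<forall>q::'a poly. degree q \<le> n \<longrightarrow> (\<exists>p N. N > 0 \<and> pderiv p = smult (of_nat N) q)" for n
  proof (induction n)
    case 0
    show ?case
    proof (intro allI impI)
      fix q :: "'a poly" assume "degree q \<le> 0"
      then obtain a where q: "q = [:a:]" by (metis degree_eq_zeroE le_zero_eq)
      show "\<exists>p N. N > 0 \<and> pderiv p = smult (of_nat N) q"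
        by (rule exI[of _ "[:0, a:]"], rule exI[of _ 1]) (simp add: q pderiv_pCons)
    qed
  next
    case (Suc n)
    show ?case
    proof (intro allI impI)
      fix q :: "'a poly" assume dq: "degree q \<le> Suc n"
      define m where "m = monom (coeff q (Suc n)) (Suc n)"
      define q' where "q' = q - m"
      have "degree q' \<le> n"
      proof (rule degree_le)
        show "\<forall>i>n. coeff q' i = 0"
        proof (intro allI impI)
          fix i assume "i > n"
          show "coeff q' i = 0"
          proof (cases "i = Suc n")
            case True thus ?thesis by (simp add: q'_def m_def)
          next
            case False
            with \<open>i > n\<close> have "i > degree q" using dq by linarith
            thus ?thesis using False by (simp add: q'_def m_def coeff_eq_0)
          qed
        qed
      qed
      then obtain p' N' where p': "N' > 0" "pderiv p' = smult (of_nat N') q'" using Suc.IH by blast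
      define p where "p = smult (of_nat (Suc (Suc n))) p' + smult (of_nat N') (monom (coeff q (Suc n)) (Suc (Suc n)))"
      have "pderiv p = smult (of_nat N' * of_nat (Suc (Suc n))) q' + smult (of_nat N' * of_nat (Suc (Suc n))) m"
        by (simp add: p_def pderiv_add pderiv_smult p' pderiv_monom m_def smult_monom[symmetric]
             mult.commute del: of_nat_Suc)
      also have "\<dots> = smult (of_nat (N' * Suc (Suc n))) (q' + m)" by (simp only: of_nat_mult smult_add_right)
      also have "q' + m = q" by (simp add: q'_def)
      finally have "pderiv p = smult (of_nat (N' * Suc (Suc n))) q" .
      thus "\<exists>p N. N > 0 \<and> pderiv p = smult (of_nat N) q" using p'(1) by (intro exI[of _ p] exI[of _ "N' * Suc (Suc n)"]) simp
    qed
  qed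
  thus ?thesis by blast
qed

lemma const_of_zero_derivs:
  fixes z :: "'a::{idom,ring_char_0} poly poly"
  assumes "pderiv_x z = 0" "pderiv_y z = 0"
  shows "\<exists>e. z = const2 e"
proof -
  have "degree z = 0" using assms(2) by (simp add: pderiv_y_def pderiv_eq_0_iff)
  then obtain v where z: "z = [:v:]" by (metis degree_eq_zeroE)
  have "pderiv v = 0" using assms(1) by (simp add: z pderiv_x_def map_poly_pCons)
  hence "degree v = 0" by (simp add: pderiv_eq_0_iff)
  then obtain e where "v = [:e:]" by (metis degree_eq_zeroE)
  thus ?thesis by (simp add: z const2_def)
qed



lemma Dx_const_mult: "pderiv_x (const2 k * f) = const2 k * pderiv_x f" by (simp add: Dx_mult)
lemma Dy_const_mult: "pderiv_y (const2 k * f) = const2 k * pderiv_y f" by (simp add: Dy_mult)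

lemma key:
  fixes A B :: "'a::{idom,ring_char_0} poly poly"
  assumes J: "Jac A B = const2 c" and cci: "c * ci = 1" and Ay: "pderiv_y A \<noteq> 0"
  shows "Jac A w = 0 \<Longrightarrow> \<exists>\<delta> p. \<delta> \<noteq> 0 \<and> const2 \<delta> * w = ev p A"
proof (induction "degree w" arbitrary: w rule: less_induct)
  case less
  define u where "u = const2 ci * (pderiv_x w * pderiv_y B - pderiv_y w * pderiv_x B)"
  have gx: "pderiv_x w = u * pderiv_x A" and gy: "pderiv_y w = u * pderiv_y A"
    using grad[OF J cci less.prems] by (simp_all add: u_def)
  have Ju: "Jac A u = 0" by (rule Jac_u[OF gx gy])
  have "\<exists>\<delta> q. \<delta> \<noteq> 0 \<and> const2 \<delta> * u = ev q A"
  proof (cases "u = 0")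
    case True thus ?thesis by (intro exI[of _ 1] exI[of _ 0]) simp
  next
    case False
    have nz: "pderiv w \<noteq> 0" using gy False Ay by (simp add: pderiv_y_def)
    hence "degree w \<noteq> 0" by (simp add: pderiv_eq_0_iff)
    have "degree (pderiv w) = degree u + degree (pderiv_y A)"
      using gy False Ay by (simp add: pderiv_y_def degree_mult_eq)
    hence "degree u < degree w" using \<open>degree w \<noteq> 0\<close> by (simp add: degree_pderiv)
    thus ?thesis using less.hyps Ju by blast
  qed
  then obtain \<delta> q where dq: "\<delta> \<noteq> 0" "const2 \<delta> * u = ev q A" by blast
  obtain p N where pN: "N > 0" "pderiv p = smult (of_nat N) q" using integ by blast
  define z where "z = const2 (\<delta> * of_nat N) * w - ev p A"
  have "pderiv_x z = const2 (\<delta> * of_nat N) * pderiv_x w - ev (pderiv p) A * pderiv_x A"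
    by (simp only: z_def Dx_diff Dx_const_mult chain_x)
  also have "\<dots> = const2 (of_nat N) * (const2 \<delta> * u - ev q A) * pderiv_x A"
    by (simp add: z_def Dx_diff Dx_const_mult chain_x pN ev_smult gx const2_mult algebra_simps)
  finally have "pderiv_x z = const2 (of_nat N) * (const2 \<delta> * u - ev q A) * pderiv_x A" .
  hence zx: "pderiv_x z = 0" using dq by simp
  have "pderiv_y z = const2 (\<delta> * of_nat N) * pderiv_y w - ev (pderiv p) A * pderiv_y A"
    by (simp only: z_def Dy_diff Dy_const_mult chain_y)
  also have "\<dots> = const2 (of_nat N) * (const2 \<delta> * u - ev q A) * pderiv_y A"
    by (simp add: z_def Dy_diff Dy_const_mult chain_y pN ev_smult gy const2_mult algebra_simps)
  finally have "pderiv_y z = const2 (of_nat N) * (const2 \<delta> * u - ev q A) * pderiv_y A" .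
  hence zy: "pderiv_y z = 0" using dq by simp
  obtain e where "z = const2 e" using const_of_zero_derivs[OF zx zy] by blast
  hence "const2 (\<delta> * of_nat N) * w = ev (p + [:e:]) A" by (simp add: z_def ev_add algebra_simps)
  moreover have "\<delta> * of_nat N \<noteq> 0" using dq pN by simp
  ultimately show ?case by blast
qed



lemma dvd_coeffs_smult:
  fixes h :: "'a::comm_ring_1 poly"
  shows "(\<forall>n. \<delta> dvd coeff h n) \<Longrightarrow> \<exists>H. h = smult \<delta> H"
proof (induct h)
  case 0 thus ?case by (intro exI[of _ 0]) simp
next
  case (pCons a h)
  have "\<delta> dvd a" using pCons.prems[rule_format, of 0] by simp
  then obtain b where b: "a = \<delta> * b" by (auto elim: dvdE)
  have "\<forall>n. \<delta> dvd coeff h n" using pCons.prems by (metis coeff_pCons_Suc)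
  then obtain H where "h = smult \<delta> H" using pCons.hyps by blast
  thus ?case by (intro exI[of _ "pCons b H"]) (simp add: b)
qed

lemma lem2:
  fixes a1 h G :: "'a::comm_ring_1 poly"
  assumes c: "coeff a1 0 = c" and cci: "c * ci = 1" and eq: "a1 * h = smult \<delta> G"
  shows "\<delta> dvd coeff h n"
proof (induction n rule: less_induct)
  case (less n)
  have e: "coeff (h * a1) n = \<delta> * coeff G n" using eq by (simp add: mult.commute)
  have "\<delta> dvd coeff h n * c"
  proof (cases n)
    case 0 thus ?thesis using e c by (simp add: coeff_mult)
  next
    case (Suc m)
    have "coeff (h * a1) n = (\<Sum>i\<le>m. coeff h i * coeff a1 (n - i)) + coeff h n * c"
      by (simp add: coeff_mult Suc c)
    moreover have "\<delta> dvd (\<Sum>i\<le>m. coeff h i * coeff a1 (n - i))"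
      by (rule dvd_sum) (use less Suc in auto)
    ultimately show ?thesis using e by (metis dvd_add_right_iff dvd_triv_left)
  qed
  hence "\<delta> dvd coeff h n * c * ci" by simp
  thus ?case using cci by (simp add: mult.assoc)
qed

lemma uni:
  fixes a :: "'a::comm_ring_1 poly"
  assumes a0: "coeff a 0 = 0" and a1: "coeff a 1 = c" and cci: "c * ci = 1"
  shows "pcompose R a = smult \<delta> G \<Longrightarrow> \<exists>R'. R = smult \<delta> R'"
proof (induct R arbitrary: G)
  case 0 thus ?case by (intro exI[of _ 0]) simp
next
  case (pCons r0 R1)
  obtain a0' a1' where ad: "a = pCons a0' a1'" by (cases a)
  have "a0' = 0" using a0 ad by simp
  have ca1: "coeff a1' 0 = c" using a1 ad by simp
  obtain g0 G' where Gd: "G = pCons g0 G'" by (cases G)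
  have "pCons r0 (a1' * pcompose R1 a) = pCons (\<delta> * g0) (smult \<delta> G')"
    using pCons.prems by (simp add: pcompose_pCons ad \<open>a0' = 0\<close> Gd)
  hence r0: "r0 = \<delta> * g0" and h: "a1' * pcompose R1 a = smult \<delta> G'" by simp_all
  have "\<forall>n. \<delta> dvd coeff (pcompose R1 a) n" using lem2[OF ca1 cci h] by blast
  then obtain H where "pcompose R1 a = smult \<delta> H" using dvd_coeffs_smult by blast
  then obtain R1' where "R1 = smult \<delta> R1'" using pCons.hyps by blast
  thus ?case by (intro exI[of _ "pCons g0 R1'"]) (simp add: r0)
qed

definition evL :: "'a::comm_ring_1 \<Rightarrow> 'a \<Rightarrow> 'a poly poly \<Rightarrow> 'a poly" where
  "evL \<alpha> \<beta> f = poly (map_poly (\<lambda>c. pcompose c [:0, \<alpha>:]) f) [:0, \<beta>:]"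

lemma evL_pCons: "evL \<alpha> \<beta> (pCons a f) = pcompose a [:0, \<alpha>:] + [:0, \<beta>:] * evL \<alpha> \<beta> f"
  by (simp add: evL_def map_poly_pCons)
lemma evL_0[simp]: "evL \<alpha> \<beta> 0 = 0" by (simp add: evL_def)
lemma evL_add: "evL \<alpha> \<beta> (f + g) = evL \<alpha> \<beta> f + evL \<alpha> \<beta> g"
proof -
  have "map_poly (\<lambda>c. pcompose c [:0, \<alpha>:]) (f + g) = map_poly (\<lambda>c. pcompose c [:0, \<alpha>:]) f + map_poly (\<lambda>c. pcompose c [:0, \<alpha>:]) g"
    by (rule poly_eqI) (simp add: coeff_map_poly pcompose_add)
  thus ?thesis by (simp add: evL_def)
qed
lemma evL_smult: "evL \<alpha> \<beta> (smult a g) = pcompose a [:0, \<alpha>:] * evL \<alpha> \<beta> g"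
  by (induct g) (simp_all add: evL_pCons pcompose_mult algebra_simps)
lemma evL_mult: "evL \<alpha> \<beta> (f * g) = evL \<alpha> \<beta> f * evL \<alpha> \<beta> g"
  by (induct f) (simp_all add: evL_pCons evL_add evL_smult algebra_simps)
lemma evL_const2: "evL \<alpha> \<beta> (const2 c) = [:c:]"
  by (simp add: const2_def evL_pCons)
lemma evL_ev: "evL \<alpha> \<beta> (ev p A) = pcompose p (evL \<alpha> \<beta> A)"
  by (induct p) (simp_all add: ev_pCons evL_add evL_mult evL_const2 pcompose_pCons)

lemma phi_coeff0: "coeff (pcompose c [:0, \<alpha>:]) 0 = coeff c 0"
  by (cases c) (simp add: pcompose_pCons)
lemma phi_coeff1: "coeff (pcompose c [:0, \<alpha>:]) (Suc 0) = \<alpha> * coeff c (Suc 0)"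
  by (cases c) (simp add: pcompose_pCons phi_coeff0 poly_0_coeff_0)
lemma evL_coeff0: "coeff (evL \<alpha> \<beta> f) 0 = coeff (coeff f 0) 0"
  by (cases f) (simp add: evL_pCons phi_coeff0 poly_0_coeff_0)
lemma evL_coeff1: "coeff (evL \<alpha> \<beta> f) 1 = \<alpha> * coeff (coeff f 0) 1 + \<beta> * coeff (coeff f 1) 0"
  by (cases f) (simp add: evL_pCons phi_coeff1 evL_coeff0 poly_0_coeff_0)



lemma Jac_at0:
  fixes A B :: "'a::idom poly poly"
  shows "coeff (coeff (Jac A B) 0) 0 =
    coeff (coeff A 0) 1 * coeff (coeff B 1) 0 - coeff (coeff A 1) 0 * coeff (coeff B 0) 1"
  by (simp add: Jac_def pderiv_x_def pderiv_y_def coeff_mult_0 coeff_map_poly coeff_pderiv)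

lemma descend:
  fixes A B w :: "'a::idom poly poly"
  assumes J: "Jac A B = const2 c" and cci: "c * ci = 1" and d: "\<delta> \<noteq> 0"
    and eq: "const2 \<delta> * w = ev p A"
  shows "w \<in> gen_subalg A"
proof -
  define \<alpha> where "\<alpha> = coeff (coeff B 1) 0"
  define \<beta> where "\<beta> = - coeff (coeff B 0) 1"
  define A0 where "A0 = coeff (coeff A 0) 0"
  define a where "a = evL \<alpha> \<beta> A - [:A0:]"
  have a0: "coeff a 0 = 0" by (simp add: a_def evL_coeff0 A0_def)
  have "c = coeff (coeff (Jac A B) 0) 0" using J by (simp add: const2_def)
  hence "c = coeff (coeff A 0) 1 * coeff (coeff B 1) 0 - coeff (coeff A 1) 0 * coeff (coeff B 0) 1"
    by (simp only: Jac_at0)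
  moreover have "coeff a 1 = \<alpha> * coeff (coeff A 0) 1 + \<beta> * coeff (coeff A 1) 0"
    by (simp only: a_def coeff_diff evL_coeff1) (simp add: A0_def)
  moreover have "\<alpha> * coeff (coeff A 0) 1 + \<beta> * coeff (coeff A 1) 0 =
     coeff (coeff A 0) 1 * coeff (coeff B 1) 0 - coeff (coeff A 1) 0 * coeff (coeff B 0) 1"
    unfolding \<alpha>_def \<beta>_def by algebra
  ultimately have a1: "coeff a 1 = c" by simp
  have "smult \<delta> (evL \<alpha> \<beta> w) = evL \<alpha> \<beta> (const2 \<delta> * w)"
    by (simp add: evL_mult evL_const2)
  also have "\<dots> = pcompose p (evL \<alpha> \<beta> A)" by (simp add: eq evL_ev)
  also have "evL \<alpha> \<beta> A = pcompose [:A0, 1:] a" by (simp add: a_def pcompose_pCons)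
  also have "pcompose p (pcompose [:A0, 1:] a) = pcompose (pcompose p [:A0, 1:]) a" by (rule pcompose_assoc)
  finally have eqR: "smult \<delta> (evL \<alpha> \<beta> w) = pcompose (pcompose p [:A0, 1:]) a" .
  obtain R' where R': "pcompose p [:A0, 1:] = smult \<delta> R'"
    using uni[OF a0 a1 cci eqR[symmetric]] by blast
  have "p = pcompose p (pcompose [:A0, 1:] [:-A0, 1:])"
    by (simp add: pcompose_pCons)
  also have "\<dots> = smult \<delta> (pcompose R' [:-A0, 1:])" by (simp add: pcompose_assoc R' pcompose_smult)
  finally have pP: "p = smult \<delta> (pcompose R' [:-A0, 1:])" .
  have "const2 \<delta> * w = const2 \<delta> * ev (pcompose R' [:-A0, 1:]) A"
    unfolding eq by (subst pP) (rule ev_smult)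
  moreover have c2: "const2 \<delta> \<noteq> (0::'a poly poly)" using d by (simp add: const2_def)
  ultimately have "w = ev (pcompose R' [:-A0, 1:]) A" using mult_left_cancel[OF c2] by blast
  thus ?thesis by (auto simp: gen_subalg_def ev_def)
qed

lemma ev_const_arg: "ev p [:a:] = [:pcompose p a:]"
  by (induct p) (simp_all add: ev_pCons pcompose_pCons const2_def)

lemma deg0_case:
  fixes A B w :: "'a::{idom,ring_char_0} poly poly"
  assumes J: "Jac A B = const2 c" and cci: "c * ci = 1" and Ay: "pderiv_y A = 0"
    and Jw: "Jac A w = 0"
  shows "w \<in> gen_subalg A"
proof -
  have "degree A = 0" using Ay by (simp add: pderiv_y_def pderiv_eq_0_iff)
  then obtain a where Aa: "A = [:a:]" by (metis degree_eq_zeroE)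
  have DxA: "pderiv_x A = [:pderiv a:]" by (simp add: Aa pderiv_x_def map_poly_pCons)
  have cnz: "c \<noteq> 0" using cci by auto
  have JB: "[:pderiv a:] * pderiv B = [:[:c:]:]" using J Ay DxA by (simp add: Jac_def pderiv_y_def const2_def)
  hence nz: "pderiv a \<noteq> 0" "pderiv B \<noteq> 0" using cnz by auto
  have "degree ([:pderiv a:] * pderiv B) = 0" using JB by simp
  hence "degree (pderiv B) = 0" using nz by (simp add: degree_mult_eq)
  then obtain b where Bb: "pderiv B = [:b:]" by (metis degree_eq_zeroE)
  have ab: "pderiv a * b = [:c:]" using JB by (simp add: Bb mult.commute)
  have bnz: "b \<noteq> 0" using ab cnz by auto
  have "degree (pderiv a * b) = degree (pderiv a) + degree b" by (rule degree_mult_eq) (use nz bnz in auto)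
  hence "degree (pderiv a) = 0" using ab by simp
  then obtain a1 where pa: "pderiv a = [:a1:]" by (metis degree_eq_zeroE)
  have "degree a = 1" using \<open>degree (pderiv a) = 0\<close> nz by (simp add: degree_pderiv pderiv_eq_0_iff)
  have "coeff (pderiv a) 0 = coeff a 1" by (simp add: coeff_pderiv)
  hence a1: "coeff a 1 = a1" using pa by simp
  obtain a0 a' where ad: "a = pCons a0 a'" by (cases a)
  have "a' \<noteq> 0" using \<open>degree a = 1\<close> ad by auto
  hence "degree a' = 0" using \<open>degree a = 1\<close> ad by simp
  then obtain a1' where "a' = [:a1':]" by (metis degree_eq_zeroE)
  hence a01: "a = [:a0, a1:]" using ad a1 by simp
  have "[:a1 * coeff b 0:] = [:c:]" using ab pa by (cases b) (simp add: mult.commute)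
  hence "a1 * coeff b 0 = c" by simp
  hence ia: "a1 * (coeff b 0 * ci) = 1" using cci by (simp add: mult.assoc[symmetric])
  define ia1 where "ia1 = coeff b 0 * ci"
  have "[:pderiv a:] * pderiv w = 0" using Jw Ay DxA by (simp add: Jac_def pderiv_y_def)
  hence "pderiv w = 0" using nz by simp
  hence "degree w = 0" by (simp add: pderiv_eq_0_iff)
  then obtain v where wv: "w = [:v:]" by (metis degree_eq_zeroE)
  have "pcompose [:- a0 * ia1, ia1:] a = [:0, 1:]"
    using ia by (simp add: a01 pcompose_pCons ia1_def algebra_simps)
  hence "pcompose (pcompose v [:- a0 * ia1, ia1:]) a = v" by (simp add: pcompose_assoc[symmetric])
  hence "w = ev (pcompose v [:- a0 * ia1, ia1:]) A" by (simp add: wv Aa ev_const_arg)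
  thus ?thesis by (auto simp: gen_subalg_def ev_def)
qed

theorem theorem3p6:
  fixes A B w :: "'a::{idom, ring_char_0} poly poly"
  assumes "JC2_complex"
    and "Jac_unit A B"
    and "Jac A w = 0"
  shows "w \<in> gen_subalg A"
proof -
  obtain c where c: "c dvd 1" "Jac A B = const2 c" using assms(2) by (auto simp: Jac_unit_def)
  from c(1) obtain ci where "1 = c * ci" by (rule dvdE)
  hence cci: "c * ci = 1" by simp
  show ?thesis
  proof (cases "pderiv_y A = 0")
    case True show ?thesis by (rule deg0_case[OF c(2) cci True assms(3)])
  next
    case False
    obtain \<delta> p where "\<delta> \<noteq> 0" "const2 \<delta> * w = ev p A" using key[OF c(2) cci False assms(3)] by blast
    thus ?thesis using descend[OF c(2) cci] by blast
  qed
qed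

end
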